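(* Let $P$ be a rooted forest on $[n]$ with natural labeling. For $1\le i\le n$ let $G_i$ be the $\mathcal{L}(P)\times\mathcal{L}(P)$ $0$-$1$ matrix with $G_i(\pi',\pi)=1$ if and only if $\pi'=\pi\partial_{\pi^{-1}_i}$. Then the monoid $\mathcal{M}$ generated by $G_1,\dots,G_n$ under matrix multiplication is $\mathcal{R}$-trivial.
   Context: A rooted forest is a disjoint union of rooted trees, a rooted tree being a connected finite poset in which each element is covered by at most one element. $\mathcal{L}(P)=\{\pi\in S_n : i\prec j \Rightarrow \pi^{-1}_i<\pi^{-1}_j\}$ in one-line notation. $\pi\tau_i$ ($1\le i<n$) swaps $\pi_i,\pi_{i+1}$ if they are incomparable in $P$ and is $\pi$ otherwise; operators act on the right; $\partial_j=\tau_j\tau_{j+1}\cdots\tau_{n-1}$. (Equivalently $G_i$ is $\overline{M}=M+(x_1+\cdots+x_n)\mathbb{1}$ evaluated at $x_i=1$, $x_j=0$ for $j\ne i$, where $M$ is the promotion graph transition matrix.) A finite monoid $\mathcal{M}$ (with identity) is $\mathcal{R}$-trivial if $x\mathcal{M}=y\mathcal{M}$ implies $x=y$ for all $x,y\in\mathcal{M}$. *)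

theory Defs
  imports Main
begin

definition strict_poset_on :: "nat \<Rightarrow> (nat \<Rightarrow> nat \<Rightarrow> bool) \<Rightarrow> bool" where
  "strict_poset_on n lt \<longleftrightarrow>
     (\<forall>x y. lt x y \<longrightarrow> x \<in> {1..n} \<and> y \<in> {1..n}) \<and>
     (\<forall>x. \<not> lt x x) \<and>
     (\<forall>x y z. lt x y \<longrightarrow> lt y z \<longrightarrow> lt x z)"

definition covers :: "(nat \<Rightarrow> nat \<Rightarrow> bool) \<Rightarrow> nat \<Rightarrow> nat \<Rightarrow> bool" where
  "covers lt x y \<longleftrightarrow> lt x y \<and> \<not> (\<exists>z. lt x z \<and> lt z y)"

(* rooted forest: disjoint union of rooted trees, i.e. a finite poset in which
   every element is covered by at most one element *)
definition rooted_forest :: "nat \<Rightarrow> (nat \<Rightarrow> nat \<Rightarrow> bool) \<Rightarrow> bool" where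
  "rooted_forest n lt \<longleftrightarrow> strict_poset_on n lt \<and>
     (\<forall>x y z. covers lt x y \<longrightarrow> covers lt x z \<longrightarrow> y = z)"

definition natural_labeling :: "(nat \<Rightarrow> nat \<Rightarrow> bool) \<Rightarrow> bool" where
  "natural_labeling lt \<longleftrightarrow> (\<forall>i j. lt i j \<longrightarrow> i < j)"

(* permutations of [n] in one-line notation: pi = [pi_1, ..., pi_n],
   pi_k = pi ! (k - 1) *)
definition is_perm :: "nat \<Rightarrow> nat list \<Rightarrow> bool" where
  "is_perm n \<pi> \<longleftrightarrow> distinct \<pi> \<and> set \<pi> = {1..n}"

(* pi^{-1}_i : the (1-based) position of i in pi *)
definition pinv :: "nat list \<Rightarrow> nat \<Rightarrow> nat" where
  "pinv \<pi> i = Suc (LEAST k. k < length \<pi> \<and> \<pi> ! k = i)"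

definition linext :: "nat \<Rightarrow> (nat \<Rightarrow> nat \<Rightarrow> bool) \<Rightarrow> nat list set" where
  "linext n lt = {\<pi>. is_perm n \<pi> \<and> (\<forall>i j. lt i j \<longrightarrow> pinv \<pi> i < pinv \<pi> j)}"

(* pi tau_i : swap pi_i, pi_{i+1} if incomparable in P *)
definition tau :: "(nat \<Rightarrow> nat \<Rightarrow> bool) \<Rightarrow> nat list \<Rightarrow> nat \<Rightarrow> nat list" where
  "tau lt \<pi> i =
     (let a = \<pi> ! (i - 1); b = \<pi> ! i in
      if \<not> lt a b \<and> \<not> lt b a then \<pi>[i - 1 := b, i := a] else \<pi>)"

(* pi partial_j = pi tau_j tau_{j+1} ... tau_{n-1} (operators act on the right) *)
definition bdry :: "nat \<Rightarrow> (nat \<Rightarrow> nat \<Rightarrow> bool) \<Rightarrow> nat list \<Rightarrow> nat \<Rightarrow> nat list" where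
  "bdry n lt \<pi> j = fold (\<lambda>k \<sigma>. tau lt \<sigma> k) [j..<n] \<pi>"

(* L(P) x L(P) matrices, represented as functions (row, column) \<Rightarrow> entry,
   which are zero outside L(P) x L(P) *)
type_synonym mat = "nat list \<Rightarrow> nat list \<Rightarrow> nat"

definition G :: "nat \<Rightarrow> (nat \<Rightarrow> nat \<Rightarrow> bool) \<Rightarrow> nat \<Rightarrow> mat" where
  "G n lt i = (\<lambda>\<pi>' \<pi>. if \<pi>' \<in> linext n lt \<and> \<pi> \<in> linext n lt \<and> \<pi>' = bdry n lt \<pi> (pinv \<pi> i)
                      then 1 else 0)"

definition idm :: "nat \<Rightarrow> (nat \<Rightarrow> nat \<Rightarrow> bool) \<Rightarrow> mat" where
  "idm n lt = (\<lambda>\<pi>' \<pi>. if \<pi> \<in> linext n lt \<and> \<pi>' = \<pi> then 1 else 0)"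

definition mmul :: "nat \<Rightarrow> (nat \<Rightarrow> nat \<Rightarrow> bool) \<Rightarrow> mat \<Rightarrow> mat \<Rightarrow> mat" where
  "mmul n lt A B = (\<lambda>\<pi>' \<pi>. \<Sum>\<sigma>\<in>linext n lt. A \<pi>' \<sigma> * B \<sigma> \<pi>)"

inductive_set gen_monoid :: "nat \<Rightarrow> (nat \<Rightarrow> nat \<Rightarrow> bool) \<Rightarrow> mat set"
  for n lt where
  one: "idm n lt \<in> gen_monoid n lt"
| gen: "i \<in> {1..n} \<Longrightarrow> G n lt i \<in> gen_monoid n lt"
| mult: "A \<in> gen_monoid n lt \<Longrightarrow> B \<in> gen_monoid n lt \<Longrightarrow> mmul n lt A B \<in> gen_monoid n lt"

definition R_trivial :: "'a set \<Rightarrow> ('a \<Rightarrow> 'a \<Rightarrow> 'a) \<Rightarrow> bool" where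
  "R_trivial M mult \<longleftrightarrow>
     (\<forall>x\<in>M. \<forall>y\<in>M. (mult x ` M) = (mult y ` M) \<longrightarrow> x = y)"

end

theory Submission
  imports Defs
begin


fun bef :: "nat list \<Rightarrow> nat \<Rightarrow> nat \<Rightarrow> bool" where
  "bef [] x z = False"
| "bef (y # ys) x z = ((y = x \<and> z \<in> set ys) \<or> bef ys x z)"

lemma bef_mem: "bef xs x z \<Longrightarrow> x \<in> set xs \<and> z \<in> set xs"
  by (induction xs) auto

lemma bef_append: "bef (xs @ ys) x z = (bef xs x z \<or> (x \<in> set xs \<and> z \<in> set ys) \<or> bef ys x z)"
  by (induction xs) auto

lemma bef_asym: "distinct xs \<Longrightarrow> bef xs x z \<Longrightarrow> \<not> bef xs z x"
  by (induction xs) (auto dest: bef_mem)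

lemma bef_total: "x \<in> set xs \<Longrightarrow> z \<in> set xs \<Longrightarrow> x \<noteq> z \<Longrightarrow> bef xs x z \<or> bef xs z x"
  by (induction xs) auto

lemma bef_irrefl: "distinct xs \<Longrightarrow> \<not> bef xs x x"
  using bef_asym by blast

lemma bef_eq_list:
  "distinct xs \<Longrightarrow> distinct ys \<Longrightarrow> set xs = set ys \<Longrightarrow> (\<forall>x z. bef xs x z = bef ys x z) \<Longrightarrow> xs = ys"
proof (induction xs arbitrary: ys)
  case Nil then show ?case by simp
next
  case (Cons y xs)
  then obtain y' ys' where ys: "ys = y' # ys'" by (cases ys) auto
  have "y = y'"
  proof (rule ccontr)
    assume ne: "y \<noteq> y'"
    have "y' \<in> set xs" using Cons.prems ys ne by auto
    then have "bef (y # xs) y y'" by simp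
    then have "bef ys y y'" using Cons.prems(4) by blast
    then show False using Cons.prems ys ne by (auto dest: bef_mem)
  qed
  have "set xs = set ys'" using Cons.prems ys \<open>y = y'\<close> by auto
  moreover have "\<forall>x z. bef xs x z = bef ys' x z"
  proof (intro allI)
    fix x z
    show "bef xs x z = bef ys' x z"
    proof (cases "x = y")
      case True
      then show ?thesis using Cons.prems ys \<open>y = y'\<close> by (auto dest: bef_mem)
    next
      case False
      then show ?thesis using Cons.prems(4) ys \<open>y = y'\<close>
        by (metis bef.simps(2))
    qed
  qed
  ultimately show ?case using Cons ys \<open>y = y'\<close> by auto
qed

lemma bef_nth: "bef xs x z \<longleftrightarrow> (\<exists>i j. i < j \<and> j < length xs \<and> xs ! i = x \<and> xs ! j = z)"
proof (induction xs)
  case Nil then show ?case by simp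
next
  case (Cons y ys)
  show ?case
  proof
    assume "bef (y # ys) x z"
    then consider "y = x" "z \<in> set ys" | "bef ys x z" by auto
    then show "\<exists>i j. i < j \<and> j < length (y # ys) \<and> (y # ys) ! i = x \<and> (y # ys) ! j = z"
    proof cases
      case 1
      then obtain j where "j < length ys" "ys ! j = z" by (auto simp: in_set_conv_nth)
      then show ?thesis using 1 by (intro exI[of _ 0] exI[of _ "Suc j"]) auto
    next
      case 2
      then obtain i j where "i < j" "j < length ys" "ys ! i = x" "ys ! j = z" using Cons.IH by auto
      then show ?thesis by (intro exI[of _ "Suc i"] exI[of _ "Suc j"]) auto
    qed
  next
    assume "\<exists>i j. i < j \<and> j < length (y # ys) \<and> (y # ys) ! i = x \<and> (y # ys) ! j = z"
    then obtain i j where ij: "i < j" "j < length (y # ys)" "(y # ys) ! i = x" "(y # ys) ! j = z" by blast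
    then obtain j' where j': "j = Suc j'" by (cases j) auto
    show "bef (y # ys) x z"
    proof (cases i)
      case 0
      then show ?thesis using ij j' by (auto simp: in_set_conv_nth)
    next
      case (Suc i')
      then have "bef ys x z" using Cons.IH ij j' by auto
      then show ?thesis by simp
    qed
  qed
qed

lemma pinv_nth: "distinct xs \<Longrightarrow> k < length xs \<Longrightarrow> pinv xs (xs ! k) = Suc k"
  unfolding pinv_def
  by (rule arg_cong[where f=Suc], rule Least_equality) (auto simp: nth_eq_iff_index_eq)

lemma pinv_bef: "distinct xs \<Longrightarrow> x \<in> set xs \<Longrightarrow> z \<in> set xs \<Longrightarrow> pinv xs x < pinv xs z \<longleftrightarrow> bef xs x z"
proof -
  assume d: "distinct xs" and x: "x \<in> set xs" and z: "z \<in> set xs"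
  obtain i where i: "i < length xs" "xs ! i = x" using x by (auto simp: in_set_conv_nth)
  obtain j where j: "j < length xs" "xs ! j = z" using z by (auto simp: in_set_conv_nth)
  have "pinv xs x < pinv xs z \<longleftrightarrow> i < j" using pinv_nth[OF d i(1)] pinv_nth[OF d j(1)] i j by simp
  also have "\<dots> \<longleftrightarrow> bef xs x z" unfolding bef_nth using d i j
    by (auto simp: nth_eq_iff_index_eq)
  finally show ?thesis .
qed

fun bub :: "(nat \<Rightarrow> nat \<Rightarrow> bool) \<Rightarrow> nat list \<Rightarrow> nat list" where
  "bub lt (a # b # rest) = (if \<not> lt a b \<and> \<not> lt b a then b # bub lt (a # rest) else a # bub lt (b # rest))"
| "bub lt xs = xs"

lemma bub_set: "set (bub lt xs) = set xs"
  by (induction lt xs rule: bub.induct) auto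

lemma bub_length: "length (bub lt xs) = length xs"
  by (induction lt xs rule: bub.induct) auto

lemma bub_distinct: "distinct xs \<Longrightarrow> distinct (bub lt xs)"
  by (metis bub_length bub_set card_distinct distinct_card)

lemma fold_tau:
  "length s = n \<Longrightarrow> 1 \<le> j \<Longrightarrow> j \<le> n \<Longrightarrow>
   fold (\<lambda>k \<sigma>. tau lt \<sigma> k) [j..<n] s = take (j - 1) s @ bub lt (drop (j - 1) s)"
proof (induction "n - j" arbitrary: j s)
  case 0
  then have jn: "j = n" by simp
  obtain P x where "s = P @ [x]" using 0 by (metis append_butlast_last_id le_zero_eq length_0_conv not_one_le_zero)
  then show ?case using jn 0 by simp
next
  case (Suc m)
  then have jn: "j < n" by simp
  obtain P a b r where sd: "s = P @ a # b # r" and lP: "length P = j - 1"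
  proof -
    have "drop (j - 1) s \<noteq> []" "drop j s \<noteq> []" using Suc.prems jn by auto
    then obtain a r' where d1: "drop (j - 1) s = a # r'" by (cases "drop (j - 1) s") auto
    have "r' = drop j s" using d1 Suc.prems
      by (metis drop_Suc drop_drop list.sel(3) tl_drop Suc_pred' One_nat_def le_imp_less_Suc less_eq_Suc_le plus_1_eq_Suc)
    then obtain b r where "r' = b # r" using \<open>drop j s \<noteq> []\<close> by (cases "drop j s") auto
    then show ?thesis using that[of "take (j - 1) s" a b r] d1 Suc.prems
      by (metis append_take_drop_id length_take min.absorb2 le_trans nat_le_linear diff_le_self)
  qed
  have IH: "fold (\<lambda>k \<sigma>. tau lt \<sigma> k) [Suc j..<n] s' = take j s' @ bub lt (drop j s')"
    if "length s' = n" for s' using Suc.hyps(1)[of "Suc j" s'] Suc.hyps(2) that jn by simp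
  have tau_eq: "tau lt s j = (if \<not> lt a b \<and> \<not> lt b a then P @ b # a # r else s)"
  proof -
    have j1: "j - 1 = length P" "j = Suc (length P)" using lP Suc.prems by auto
    show ?thesis unfolding tau_def Let_def using j1 sd by (simp add: nth_append list_update_append)
  qed
  have "fold (\<lambda>k \<sigma>. tau lt \<sigma> k) [j..<n] s = fold (\<lambda>k \<sigma>. tau lt \<sigma> k) [Suc j..<n] (tau lt s j)"
    using jn by (simp add: upt_conv_Cons)
  also have "\<dots> = take j (tau lt s j) @ bub lt (drop j (tau lt s j))"
    by (rule IH) (simp add: tau_def Let_def Suc.prems)
  also have "\<dots> = take (j - 1) s @ bub lt (drop (j - 1) s)"
  proof -
    have j1: "j - 1 = length P" "j = Suc (length P)" using lP Suc.prems by auto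
    show ?thesis using tau_eq sd j1 by (simp add: take_append drop_append)
  qed
  finally show ?case .
qed



locale FC = fixes n :: nat and lt :: "nat \<Rightarrow> nat \<Rightarrow> bool"
  assumes rf: "rooted_forest n lt" and nl: "natural_labeling lt"
begin

lemma lt_irrefl: "\<not> lt x x"
  using rf unfolding rooted_forest_def strict_poset_on_def by blast

lemma lt_trans: "lt x y \<Longrightarrow> lt y z \<Longrightarrow> lt x z"
  using rf unfolding rooted_forest_def strict_poset_on_def by blast

lemma lt_range: "lt x y \<Longrightarrow> x \<in> {1..n} \<and> y \<in> {1..n}"
  using rf unfolding rooted_forest_def strict_poset_on_def by blast

lemma lt_less: "lt x y \<Longrightarrow> x < y"
  using nl unfolding natural_labeling_def by blast

lemma covers_unique: "covers lt x y \<Longrightarrow> covers lt x z \<Longrightarrow> y = z"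
  using rf unfolding rooted_forest_def by blast

lemma above_cover:
  assumes "lt c a"
  shows "\<exists>q. covers lt c q \<and> (q = a \<or> lt q a)"
proof -
  define r where "r = (LEAST u. lt c u \<and> (u = a \<or> lt u a))"
  have r: "lt c r \<and> (r = a \<or> lt r a)" unfolding r_def by (rule LeastI[of _ a]) (use assms in auto)
  have "covers lt c r"
    unfolding covers_def
  proof (intro conjI notI)
    show "lt c r" using r by blast
    assume "\<exists>z. lt c z \<and> lt z r"
    then obtain w where w: "lt c w" "lt w r" by blast
    then have "lt c w \<and> (w = a \<or> lt w a)" using r lt_trans by blast
    then have "r \<le> w" unfolding r_def by (rule Least_le)
    then show False using lt_less[OF w(2)] by simp
  qed
  then show ?thesis using r by blast
qed

lemma anc_total: "lt c a \<Longrightarrow> lt c b \<Longrightarrow> a = b \<or> lt a b \<or> lt b a"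
proof (induction "n - c" arbitrary: c rule: less_induct)
  case less
  obtain q where q: "covers lt c q" "q = a \<or> lt q a" using above_cover[OF less.prems(1)] by blast
  obtain q' where q': "covers lt c q'" "q' = b \<or> lt q' b" using above_cover[OF less.prems(2)] by blast
  have "q' = q" using q q' covers_unique by blast
  have cq: "lt c q" using q unfolding covers_def by blast
  then have "n - q < n - c" using lt_less[OF cq] lt_range[OF cq] by auto
  show ?case
  proof (cases "q = a")
    case True then show ?thesis using q' \<open>q' = q\<close> by auto
  next
    case False
    show ?thesis
    proof (cases "q = b")
      case True then show ?thesis using q by auto
    next
      case False
      then show ?thesis using less.hyps[OF \<open>n - q < n - c\<close>] q q' \<open>q' = q\<close> \<open>q \<noteq> a\<close> by blast
    qed
  qed
qed

definition Up :: "nat \<Rightarrow> nat set" where "Up c = insert c {y. lt c y}"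

definition srt :: "nat list \<Rightarrow> bool" where
  "srt l \<longleftrightarrow> (\<forall>x z. lt x z \<longrightarrow> x \<in> set l \<longrightarrow> z \<in> set l \<longrightarrow> bef l x z)"

lemma Up_lt: "x \<in> Up c \<Longrightarrow> lt x p \<Longrightarrow> lt c p"
  unfolding Up_def using lt_trans by blast

lemma bub_rules:
  assumes "distinct (c # rest)" "srt (c # rest)" "\<forall>y. lt c y \<longrightarrow> y \<in> set rest"
  shows "\<forall>x\<in>set (c # rest). \<forall>z\<in>set (c # rest).
     (x \<notin> Up c \<longrightarrow> z \<notin> Up c \<longrightarrow> bef (bub lt (c # rest)) x z = bef (c # rest) x z) \<and>
     (x \<in> Up c \<longrightarrow> z \<notin> Up c \<longrightarrow> bef (bub lt (c # rest)) x z = (\<exists>p. covers lt x p \<and> bef (c # rest) p z)) \<and>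
     (x \<in> Up c \<longrightarrow> z \<in> Up c \<longrightarrow> bef (bub lt (c # rest)) x z = bef (c # rest) x z)"
  using assms
proof (induction rest arbitrary: c)
  case Nil
  have "\<not> lt c y" for y using Nil.prems(3) by auto
  then show ?case by (auto simp: Up_def covers_def)
next
  case (Cons b rest')
  let ?l = "c # b # rest'"
  have dist: "distinct ?l" using Cons.prems by blast
  show ?case
  proof (cases "\<not> lt c b \<and> \<not> lt b c")
    case True
    have out: "bub lt ?l = b # bub lt (c # rest')" using True by simp
    have bef_rm: "bef ?l x z = bef (c # rest') x z" if "x \<noteq> b" "z \<noteq> b" for x z
      using that by auto
    have p1: "distinct (c # rest')" using dist by auto
    have p2: "srt (c # rest')" unfolding srt_def
    proof (intro allI impI)
      fix x z assume "lt x z" "x \<in> set (c # rest')" "z \<in> set (c # rest')"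
      moreover have "x \<noteq> b" "z \<noteq> b" using calculation dist by auto
      ultimately show "bef (c # rest') x z" using Cons.prems(2) bef_rm unfolding srt_def by auto
    qed
    have p3: "\<forall>y. lt c y \<longrightarrow> y \<in> set rest'" using Cons.prems(3) True by auto
    note IH = Cons.IH[OF p1 p2 p3]
    have I1: "\<And>x z. x \<in> set (c # rest') \<Longrightarrow> z \<in> set (c # rest') \<Longrightarrow> x \<notin> Up c \<Longrightarrow> z \<notin> Up c \<Longrightarrow> bef (bub lt (c # rest')) x z = bef (c # rest') x z"
      using IH by blast
    have I2: "\<And>x z. x \<in> set (c # rest') \<Longrightarrow> z \<in> set (c # rest') \<Longrightarrow> x \<in> Up c \<Longrightarrow> z \<notin> Up c \<Longrightarrow> bef (bub lt (c # rest')) x z = (\<exists>p. covers lt x p \<and> bef (c # rest') p z)"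
      using IH by blast
    have I3: "\<And>x z. x \<in> set (c # rest') \<Longrightarrow> z \<in> set (c # rest') \<Longrightarrow> x \<in> Up c \<Longrightarrow> z \<in> Up c \<Longrightarrow> bef (bub lt (c # rest')) x z = bef (c # rest') x z"
      using IH by blast
    have bnotUp: "b \<notin> Up c" using True dist unfolding Up_def by auto
    have setout: "set (bub lt (c # rest')) = set (c # rest')" by (rule bub_set)
    have bnot: "b \<notin> set (c # rest')" using dist by auto
    show ?thesis
    proof (intro ballI conjI impI)
      fix x z assume x: "x \<in> set ?l" and z: "z \<in> set ?l"
      {
        assume xn: "x \<notin> Up c" and zn: "z \<notin> Up c"
        show "bef (bub lt ?l) x z = bef ?l x z"
        proof (cases "x = b")
          case True
          show ?thesis
          proof (cases "z = b")
            case True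
            have "distinct (bub lt ?l)" using dist by (rule bub_distinct)
            then show ?thesis using True \<open>x = b\<close> dist by (simp add: bef_irrefl)
          next
            case False
            have "z \<noteq> c" using zn unfolding Up_def by auto
            then have "z \<in> set rest'" using z False by auto
            then show ?thesis using \<open>x = b\<close> out setout by simp
          qed
        next
          case False
          then show ?thesis
          proof (cases "z = b")
            case True
            then show ?thesis using out bnot \<open>x \<noteq> b\<close> xn dist unfolding Up_def
              by (auto dest: bef_mem simp: setout)
          next
            case False
            have "x \<in> set (c # rest')" "z \<in> set (c # rest')" using x z \<open>x \<noteq> b\<close> False by auto
            then show ?thesis using I1[OF _ _ xn zn] out bef_rm[OF \<open>x \<noteq> b\<close> False] \<open>x \<noteq> b\<close> by simp
          qed
        qed
      }
      {
        assume xn: "x \<in> Up c" and zn: "z \<notin> Up c"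
        have xb: "x \<noteq> b" using xn bnotUp by auto
        show "bef (bub lt ?l) x z = (\<exists>p. covers lt x p \<and> bef ?l p z)"
        proof (cases "z = b")
          case True
          have "\<not> bef (bub lt ?l) x z" using True out bnot xb by (auto dest: bef_mem simp: setout)
          moreover have "\<not> (covers lt x p \<and> bef ?l p z)" for p
          proof
            assume h: "covers lt x p \<and> bef ?l p z"
            then have "p = c" using True dist by (auto dest: bef_mem)
            then show False using h xn lt_irrefl Up_lt unfolding covers_def by blast
          qed
          ultimately show ?thesis by blast
        next
          case False
          have "bef (bub lt ?l) x z = bef (bub lt (c # rest')) x z" using out xb by simp
          also have "\<dots> = (\<exists>p. covers lt x p \<and> bef (c # rest') p z)"
            using I2[OF _ _ xn zn] x z xb False by simp
          also have "\<dots> = (\<exists>p. covers lt x p \<and> bef ?l p z)"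
          proof -
            have "p \<noteq> b" if "covers lt x p" for p
              using that xn Up_lt bnotUp unfolding covers_def Up_def by blast
            then show ?thesis using bef_rm False by blast
          qed
          finally show ?thesis .
        qed
      }
      {
        assume xn: "x \<in> Up c" and zn: "z \<in> Up c"
        then have "x \<noteq> b" "z \<noteq> b" using bnotUp by auto
        moreover have "x \<in> set (c # rest')" "z \<in> set (c # rest')" using x z calculation by auto
        ultimately show "bef (bub lt ?l) x z = bef ?l x z" using I3[OF _ _ xn zn] out bef_rm by simp
      }
    qed
  next
    case False
    have cb: "lt c b"
    proof (rule ccontr)
      assume "\<not> lt c b"
      then have "lt b c" using False by blast
      then have "bef ?l b c" using Cons.prems(2) unfolding srt_def by simp
      then show False using dist by (auto dest: bef_mem)
    qed
    have out: "bub lt ?l = c # bub lt (b # rest')" using cb by simp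
    have bef_rm: "bef ?l x z = bef (b # rest') x z" if "x \<noteq> c" for x z
      using that by auto
    have p1: "distinct (b # rest')" using dist by auto
    have p2: "srt (b # rest')" unfolding srt_def
    proof (intro allI impI)
      fix x z assume "lt x z" "x \<in> set (b # rest')" "z \<in> set (b # rest')"
      moreover have "x \<noteq> c" using calculation dist by auto
      ultimately show "bef (b # rest') x z" using Cons.prems(2) bef_rm unfolding srt_def by auto
    qed
    have up_eq: "lt c y \<longleftrightarrow> lt b y" if "y \<in> set rest'" for y
    proof
      assume cy: "lt c y"
      have "y \<noteq> b" using that dist by auto
      moreover have "\<not> lt y b"
      proof
        assume "lt y b"
        then have "bef ?l y b" using Cons.prems(2) that unfolding srt_def by simp
        then show False using dist that by (auto dest: bef_mem)
      qed
      ultimately show "lt b y" using anc_total[OF cb cy] by blast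
    next
      assume "lt b y" then show "lt c y" using cb lt_trans by blast
    qed
    have p3: "\<forall>y. lt b y \<longrightarrow> y \<in> set rest'"
    proof (intro allI impI)
      fix y assume "lt b y"
      then have "lt c y" using cb lt_trans by blast
      then have "y \<in> set (b # rest')" using Cons.prems(3) by blast
      then show "y \<in> set rest'" using \<open>lt b y\<close> lt_irrefl by auto
    qed
    note IH = Cons.IH[OF p1 p2 p3]
    have J1: "\<And>x z. x \<in> set (b # rest') \<Longrightarrow> z \<in> set (b # rest') \<Longrightarrow> x \<notin> Up b \<Longrightarrow> z \<notin> Up b \<Longrightarrow> bef (bub lt (b # rest')) x z = bef (b # rest') x z"
      using IH by blast
    have J2: "\<And>x z. x \<in> set (b # rest') \<Longrightarrow> z \<in> set (b # rest') \<Longrightarrow> x \<in> Up b \<Longrightarrow> z \<notin> Up b \<Longrightarrow> bef (bub lt (b # rest')) x z = (\<exists>p. covers lt x p \<and> bef (b # rest') p z)"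
      using IH by blast
    have J3: "\<And>x z. x \<in> set (b # rest') \<Longrightarrow> z \<in> set (b # rest') \<Longrightarrow> x \<in> Up b \<Longrightarrow> z \<in> Up b \<Longrightarrow> bef (bub lt (b # rest')) x z = bef (b # rest') x z"
      using IH by blast
    have cov: "covers lt c b"
      unfolding covers_def
    proof (intro conjI notI)
      show "lt c b" by (rule cb)
      assume "\<exists>z. lt c z \<and> lt z b"
      then obtain w where w: "lt c w" "lt w b" by blast
      have "w \<in> set (b # rest')" using Cons.prems(3) w by blast
      then have "w \<in> set ?l" "b \<in> set ?l" by auto
      then have "bef ?l w b" using Cons.prems(2) w unfolding srt_def by blast
      then show False using dist w lt_irrefl by (auto dest: bef_mem)
    qed
    have setout: "set (bub lt (b # rest')) = set (b # rest')" by (rule bub_set)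
    have cnot: "c \<notin> set (b # rest')" using dist by auto
    have Up_eq: "x \<in> Up c \<longleftrightarrow> x \<in> Up b" if "x \<in> set (b # rest')" for x
      using that up_eq cb cnot lt_irrefl unfolding Up_def by auto
    show ?thesis
    proof (intro ballI conjI impI)
      fix x z assume x: "x \<in> set ?l" and z: "z \<in> set ?l"
      {
        assume xn: "x \<notin> Up c" and zn: "z \<notin> Up c"
        then have xc: "x \<noteq> c" and "z \<noteq> c" unfolding Up_def by auto
        then have xs: "x \<in> set (b # rest')" and zs: "z \<in> set (b # rest')" using x z by auto
        have "x \<notin> Up b" "z \<notin> Up b" using Up_eq[OF xs] Up_eq[OF zs] xn zn by auto
        then show "bef (bub lt ?l) x z = bef ?l x z" using J1[OF xs zs] out bef_rm[OF xc] xc by simp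
      }
      {
        assume xn: "x \<in> Up c" and zn: "z \<notin> Up c"
        have zc: "z \<noteq> c" using zn unfolding Up_def by auto
        show "bef (bub lt ?l) x z = (\<exists>p. covers lt x p \<and> bef ?l p z)"
        proof (cases "x = c")
          case True
          have zb: "z \<noteq> b" using zn cb unfolding Up_def by auto
          have "bef (bub lt ?l) x z" using True out z zc setout by auto
          moreover have "bef ?l b z" using z zc zb by auto
          ultimately show ?thesis using cov True by blast
        next
          case False
          have xU: "x \<in> Up b" using Up_eq x False xn by auto
          have zU: "z \<notin> Up b" using Up_eq z zc zn by auto
          have "bef (bub lt ?l) x z = bef (bub lt (b # rest')) x z" using out False by simp
          also have "\<dots> = (\<exists>p. covers lt x p \<and> bef (b # rest') p z)"
            using J2[OF _ _ xU zU] x z False zc by simp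
          also have "\<dots> = (\<exists>p. covers lt x p \<and> bef ?l p z)"
          proof -
            have "p \<noteq> c" if "covers lt x p" for p
              using that xn Up_lt lt_irrefl unfolding covers_def by blast
            then show ?thesis using bef_rm by blast
          qed
          finally show ?thesis .
        qed
      }
      {
        assume xn: "x \<in> Up c" and zn: "z \<in> Up c"
        show "bef (bub lt ?l) x z = bef ?l x z"
        proof (cases "x = c")
          case True
          show ?thesis
          proof (cases "z = c")
            case True
            have "distinct (bub lt ?l)" using dist by (rule bub_distinct)
            then show ?thesis using True \<open>x = c\<close> dist by (simp add: bef_irrefl)
          next
            case False
            then have "z \<in> set (b # rest')" using z by auto
            then show ?thesis using \<open>x = c\<close> out setout by simp
          qed
        next
          case False
          show ?thesis
          proof (cases "z = c")
            case True
            then show ?thesis using out \<open>x \<noteq> c\<close> cnot dist by (auto dest: bef_mem simp: setout)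
          next
            case False
            have xs: "x \<in> set (b # rest')" and zs: "z \<in> set (b # rest')" using x z False \<open>x \<noteq> c\<close> by auto
            have "x \<in> Up b" "z \<in> Up b" using Up_eq[OF xs] Up_eq[OF zs] xn zn by auto
            then show ?thesis using J3[OF xs zs] out bef_rm[OF \<open>x \<noteq> c\<close>] \<open>x \<noteq> c\<close> by simp
          qed
        qed
      }
    qed
  qed
qed

lemma bub_r1:
  assumes "distinct (c # rest)" "srt (c # rest)" "\<forall>y. lt c y \<longrightarrow> y \<in> set rest"
    "x \<in> set (c # rest)" "z \<in> set (c # rest)" "x \<notin> Up c" "z \<notin> Up c"
  shows "bef (bub lt (c # rest)) x z = bef (c # rest) x z"
proof -
  note R = bub_rules[OF assms(1-3), rule_format, OF assms(4,5)]
  show ?thesis using R assms(6,7) by simp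
qed
lemma bub_r2:
  assumes "distinct (c # rest)" "srt (c # rest)" "\<forall>y. lt c y \<longrightarrow> y \<in> set rest"
    "x \<in> set (c # rest)" "z \<in> set (c # rest)" "x \<in> Up c" "z \<notin> Up c"
  shows "bef (bub lt (c # rest)) x z = (\<exists>p. covers lt x p \<and> bef (c # rest) p z)"
proof -
  note R = bub_rules[OF assms(1-3), rule_format, OF assms(4,5)]
  show ?thesis using R assms(6,7) by simp
qed
lemma bub_r3:
  assumes "distinct (c # rest)" "srt (c # rest)" "\<forall>y. lt c y \<longrightarrow> y \<in> set rest"
    "x \<in> set (c # rest)" "z \<in> set (c # rest)" "x \<in> Up c" "z \<in> Up c"
  shows "bef (bub lt (c # rest)) x z = bef (c # rest) x z"
proof -
  note R = bub_rules[OF assms(1-3), rule_format, OF assms(4,5)]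
  show ?thesis using R assms(6,7) by simp
qed
end


context FC begin

definition L :: "nat list set" where "L = linext n lt"

definition fp :: "nat \<Rightarrow> nat list \<Rightarrow> nat list" where
  "fp g \<rho> = bdry n lt \<rho> (pinv \<rho> g)"

lemma inL: "\<rho> \<in> L \<longleftrightarrow> distinct \<rho> \<and> set \<rho> = {1..n} \<and> (\<forall>i j. lt i j \<longrightarrow> bef \<rho> i j)"
proof
  assume "\<rho> \<in> L"
  then have d: "distinct \<rho>" "set \<rho> = {1..n}" and o: "\<forall>i j. lt i j \<longrightarrow> pinv \<rho> i < pinv \<rho> j"
    unfolding L_def linext_def is_perm_def by auto
  have "bef \<rho> i j" if "lt i j" for i j
    using o that pinv_bef[OF d(1)] lt_range[OF that] d(2) by auto
  then show "distinct \<rho> \<and> set \<rho> = {1..n} \<and> (\<forall>i j. lt i j \<longrightarrow> bef \<rho> i j)" using d by blast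
next
  assume h: "distinct \<rho> \<and> set \<rho> = {1..n} \<and> (\<forall>i j. lt i j \<longrightarrow> bef \<rho> i j)"
  have "pinv \<rho> i < pinv \<rho> j" if "lt i j" for i j
    using h that pinv_bef lt_range[OF that] by auto
  then show "\<rho> \<in> L" using h unfolding L_def linext_def is_perm_def by auto
qed

lemma L_length: "\<rho> \<in> L \<Longrightarrow> length \<rho> = n"
  by (metis card_atLeastAtMost diff_Suc_1 distinct_card inL)

lemma fp_decomp:
  assumes "\<rho> \<in> L" "g \<in> {1..n}"
  shows "\<exists>P rest. \<rho> = P @ g # rest \<and> fp g \<rho> = P @ bub lt (g # rest)"
proof -
  have d: "distinct \<rho>" "set \<rho> = {1..n}" using assms inL by auto
  obtain k where k: "k < length \<rho>" "\<rho> ! k = g" using d assms(2) by (metis in_set_conv_nth)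
  have pk: "pinv \<rho> g = Suc k" using pinv_nth[OF d(1) k(1)] k(2) by simp
  have ln: "length \<rho> = n" using L_length assms by blast
  have e1: "fp g \<rho> = take k \<rho> @ bub lt (drop k \<rho>)"
    unfolding fp_def bdry_def pk using fold_tau[of \<rho> n "Suc k" lt] ln k by simp
  have e2: "drop k \<rho> = g # drop (Suc k) \<rho>" using k by (metis Cons_nth_drop_Suc)
  have e3: "\<rho> = take k \<rho> @ g # drop (Suc k) \<rho>" using e2 by (metis append_take_drop_id)
  have e4: "fp g \<rho> = take k \<rho> @ bub lt (g # drop (Suc k) \<rho>)" using e1 e2 by (simp only:)
  show ?thesis using e3 e4 by blast
qed

lemma Up_sub: "x \<in> Up g \<Longrightarrow> \<rho> \<in> L \<Longrightarrow> g \<in> {1..n} \<Longrightarrow> x \<in> {1..n}"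
  unfolding Up_def using lt_range by auto

lemma fp_rules:
  assumes "\<rho> \<in> L" "g \<in> {1..n}" "x \<in> {1..n}" "z \<in> {1..n}"
  shows "(x \<notin> Up g \<longrightarrow> z \<notin> Up g \<longrightarrow> bef (fp g \<rho>) x z = bef \<rho> x z) \<and>
     (x \<in> Up g \<longrightarrow> z \<notin> Up g \<longrightarrow> bef (fp g \<rho>) x z = (\<exists>p. covers lt x p \<and> bef \<rho> p z)) \<and>
     (x \<in> Up g \<longrightarrow> z \<in> Up g \<longrightarrow> bef (fp g \<rho>) x z = bef \<rho> x z) \<and>
     set (fp g \<rho>) = set \<rho> \<and> distinct (fp g \<rho>)"
proof -
  obtain P rest where PR: "\<rho> = P @ g # rest" "fp g \<rho> = P @ bub lt (g # rest)"
    using fp_decomp[OF assms(1,2)] by (elim exE conjE)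
  have d: "distinct \<rho>" "set \<rho> = {1..n}" and so: "\<forall>i j. lt i j \<longrightarrow> bef \<rho> i j" using assms inL by auto
  have dist: "distinct (g # rest)" and disj: "set P \<inter> set (g # rest) = {}" using d PR by auto
  have befsuf: "bef \<rho> a b = bef (g # rest) a b" if "a \<notin> set P" for a b
    using that PR(1) by (auto simp: bef_append dest: bef_mem)
  have srt: "srt (g # rest)" unfolding srt_def
  proof (intro allI impI)
    fix a b assume "lt a b" "a \<in> set (g # rest)" "b \<in> set (g # rest)"
    then show "bef (g # rest) a b" using so befsuf disj by blast
  qed
  have up: "\<forall>y. lt g y \<longrightarrow> y \<in> set rest"
  proof (intro allI impI)
    fix y assume "lt g y"
    then have "bef \<rho> g y" using so by blast
    moreover have "g \<notin> set P" using disj by auto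
    ultimately have "bef (g # rest) g y" using befsuf by blast
    then show "y \<in> set rest" using dist by (auto dest: bef_mem)
  qed
  note R1 = bub_r1[OF dist srt up] and R2 = bub_r2[OF dist srt up] and R3 = bub_r3[OF dist srt up]
  have Upsuf: "a \<in> set (g # rest)" if "a \<in> Up g" for a using that up unfolding Up_def by auto
  have mem: "a \<in> set P \<or> a \<in> set (g # rest)" if "a \<in> {1..n}" for a using that d PR by auto
  have setout: "set (bub lt (g # rest)) = set (g # rest)" by (rule bub_set)
  have befo: "bef (fp g \<rho>) a b = (bef P a b \<or> (a \<in> set P \<and> b \<in> set (g # rest)) \<or> bef (bub lt (g # rest)) a b)" for a b
    using PR(2) setout by (simp add: bef_append)
  have befr: "bef \<rho> a b = (bef P a b \<or> (a \<in> set P \<and> b \<in> set (g # rest)) \<or> bef (g # rest) a b)" for a b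
    using PR(1) by (simp add: bef_append)
  have r1: "bef (fp g \<rho>) x z = bef \<rho> x z" if "x \<notin> Up g" "z \<notin> Up g"
  proof (cases "x \<in> set (g # rest) \<and> z \<in> set (g # rest)")
    case True
    then have "x \<notin> set P" using disj by blast
    then have "bef (fp g \<rho>) x z = bef (bub lt (g # rest)) x z" "bef \<rho> x z = bef (g # rest) x z"
      using befo befr by (auto dest: bef_mem)
    then show ?thesis using R1[OF _ _ that] True by simp
  next
    case False
    have "\<not> bef (bub lt (g # rest)) x z" "\<not> bef (g # rest) x z" using False setout by (auto dest: bef_mem)
    then show ?thesis unfolding befo befr by blast
  qed
  have r2: "bef (fp g \<rho>) x z = (\<exists>p. covers lt x p \<and> bef \<rho> p z)" if xu: "x \<in> Up g" and zu: "z \<notin> Up g"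
  proof -
    have xs: "x \<in> set (g # rest)" using Upsuf xu by blast
    then have xP: "x \<notin> set P" using disj by blast
    have pu: "p \<in> Up g" if "covers lt x p" for p using that xu Up_lt unfolding covers_def Up_def by blast
    have eq2: "bef \<rho> p z = bef (g # rest) p z" if "covers lt x p" for p
      using befsuf pu[OF that] Upsuf disj by blast
    show ?thesis
    proof (cases "z \<in> set (g # rest)")
      case True
      have "bef (fp g \<rho>) x z = bef (bub lt (g # rest)) x z" using befo xP by (auto dest: bef_mem)
      also have "\<dots> = (\<exists>p. covers lt x p \<and> bef (g # rest) p z)" using R2[OF xs True xu zu] .
      finally show ?thesis using eq2 by blast
    next
      case False
      have "\<not> bef (fp g \<rho>) x z" using befo xP False setout by (auto dest: bef_mem)
      moreover have "\<not> bef \<rho> p z" if "covers lt x p" for p using eq2[OF that] False by (auto dest: bef_mem)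
      ultimately show ?thesis by blast
    qed
  qed
  have r3: "bef (fp g \<rho>) x z = bef \<rho> x z" if "x \<in> Up g" "z \<in> Up g"
  proof -
    have xs: "x \<in> set (g # rest)" "z \<in> set (g # rest)" using Upsuf that by auto
    then have "x \<notin> set P" using disj by blast
    then have "bef (fp g \<rho>) x z = bef (bub lt (g # rest)) x z" "bef \<rho> x z = bef (g # rest) x z"
      using befo befr by (auto dest: bef_mem)
    then show ?thesis using R3[OF xs that] by simp
  qed
  have "set (fp g \<rho>) = set \<rho>" using PR setout by simp
  moreover have "distinct (fp g \<rho>)" using PR d bub_distinct[OF dist] setout by auto
  ultimately show ?thesis using r1 r2 r3 by blast
qed

lemma fp_L:
  assumes "\<rho> \<in> L" "g \<in> {1..n}"
  shows "fp g \<rho> \<in> L"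
proof -
  have d: "distinct \<rho>" "set \<rho> = {1..n}" and so: "\<forall>i j. lt i j \<longrightarrow> bef \<rho> i j" using assms inL by auto
  have sd: "set (fp g \<rho>) = {1..n}" "distinct (fp g \<rho>)" using fp_rules[OF assms assms(2) assms(2)] d by auto
  have "bef (fp g \<rho>) i j" if ij: "lt i j" for i j
  proof -
    have r: "i \<in> {1..n}" "j \<in> {1..n}" using lt_range[OF ij] by auto
    note F = fp_rules[OF assms r] and F' = fp_rules[OF assms r(2) r(1)]
    have ne: "i \<noteq> j" using ij lt_irrefl by blast
    show ?thesis
    proof (cases "i \<in> Up g")
      case True
      then have "j \<in> Up g" using ij Up_lt unfolding Up_def by blast
      then show ?thesis using F True so ij by blast
    next
      case False
      show ?thesis
      proof (cases "j \<in> Up g")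
        case False
        then show ?thesis using F \<open>i \<notin> Up g\<close> so ij by blast
      next
        case True
        have "\<not> bef \<rho> p i" if "covers lt j p" for p
        proof -
          have "lt i p" using that ij lt_trans unfolding covers_def by blast
          then show ?thesis using so bef_asym d(1) by blast
        qed
        then have "\<not> bef (fp g \<rho>) j i" using F' True \<open>i \<notin> Up g\<close> by blast
        then show ?thesis using bef_total[of i "fp g \<rho>" j] sd r ne by blast
      qed
    qed
  qed
  then show ?thesis using sd inL by blast
qed

end


context FC begin

definition F :: "nat list \<Rightarrow> nat list \<Rightarrow> nat list" where
  "F ws \<rho> = fold fp ws \<rho>"

lemma F_Nil[simp]: "F [] \<rho> = \<rho>" by (simp add: F_def)
lemma F_Cons[simp]: "F (g # ws) \<rho> = F ws (fp g \<rho>)" by (simp add: F_def)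
lemma F_append: "F (a @ b) \<rho> = F b (F a \<rho>)" by (simp add: F_def)

lemma F_L: "set ws \<subseteq> {1..n} \<Longrightarrow> \<rho> \<in> L \<Longrightarrow> F ws \<rho> \<in> L"
  by (induction ws arbitrary: \<rho>) (simp_all add: fp_L)

definition wt :: "nat \<Rightarrow> nat \<Rightarrow> nat" where "wt x z = (n - x) + (n - z)"

definition AG :: "nat \<Rightarrow> nat list \<Rightarrow> nat list \<Rightarrow> bool" where
  "AG k \<rho> \<sigma> \<longleftrightarrow> (\<forall>x\<in>{1..n}. \<forall>z\<in>{1..n}. wt x z < k \<longrightarrow> (bef \<rho> x z \<longleftrightarrow> bef \<sigma> x z))"

definition UU :: "nat list \<Rightarrow> nat set" where "UU w = (\<Union>g\<in>set w. Up g)"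

definition NU :: "nat list \<Rightarrow> nat list \<Rightarrow> nat list \<Rightarrow> bool" where
  "NU w \<rho> \<sigma> \<longleftrightarrow> (\<forall>x\<in>{1..n}. \<forall>z\<in>{1..n}. x \<notin> UU w \<longrightarrow> z \<notin> UU w \<longrightarrow> (bef \<rho> x z \<longleftrightarrow> bef \<sigma> x z))"

lemma bef_L_lt: "\<rho> \<in> L \<Longrightarrow> lt x z \<Longrightarrow> bef \<rho> x z"
  using inL by blast

lemma bef_L_anti: "\<rho> \<in> L \<Longrightarrow> x \<in> {1..n} \<Longrightarrow> z \<in> {1..n} \<Longrightarrow> x \<noteq> z \<Longrightarrow> bef \<rho> x z \<longleftrightarrow> \<not> bef \<rho> z x"
  using inL bef_total bef_asym by metis

lemma Up_comp: "x \<in> Up g \<Longrightarrow> z \<in> Up g \<Longrightarrow> x = z \<or> lt x z \<or> lt z x"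
  unfolding Up_def using anc_total by auto

lemma step_pair:
  assumes "\<rho> \<in> L" "\<sigma> \<in> L" "g \<in> {1..n}" "AG k \<rho> \<sigma>" "x \<in> {1..n}" "z \<in> {1..n}" "wt x z \<le> k"
    and side: "x \<notin> Up g \<Longrightarrow> z \<notin> Up g \<Longrightarrow> (bef \<rho> x z \<longleftrightarrow> bef \<sigma> x z)"
  shows "bef (fp g \<rho>) x z \<longleftrightarrow> bef (fp g \<sigma>) x z"
proof -
  have L1: "fp g \<rho> \<in> L" "fp g \<sigma> \<in> L" using fp_L assms by auto
  have case2: "bef (fp g \<rho>) a b \<longleftrightarrow> bef (fp g \<sigma>) a b"
    if ab: "a \<in> {1..n}" "b \<in> {1..n}" "wt a b \<le> k" "a \<in> Up g" "b \<notin> Up g" for a b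
  proof -
    have e1: "bef (fp g \<rho>) a b = (\<exists>p. covers lt a p \<and> bef \<rho> p b)"
      using fp_rules[OF assms(1,3) ab(1,2)] ab by blast
    have e2: "bef (fp g \<sigma>) a b = (\<exists>p. covers lt a p \<and> bef \<sigma> p b)"
      using fp_rules[OF assms(2,3) ab(1,2)] ab by blast
    have "bef \<rho> p b = bef \<sigma> p b" if "covers lt a p" for p
    proof -
      have ap: "lt a p" using that unfolding covers_def by blast
      then have "p \<in> {1..n}" "a < p" using lt_range lt_less by auto
      then have "wt p b < k" using ab(3) unfolding wt_def by auto
      then show ?thesis using assms(4) \<open>p \<in> {1..n}\<close> ab(2) unfolding AG_def by blast
    qed
    then show ?thesis using e1 e2 by blast
  qed
  show ?thesis
  proof (cases "x \<in> Up g")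
    case True
    show ?thesis
    proof (cases "z \<in> Up g")
      case True
      then consider "x = z" | "lt x z" | "lt z x" using Up_comp \<open>x \<in> Up g\<close> by blast
      then show ?thesis
      proof cases
        case 1 then show ?thesis using L1 inL bef_irrefl by metis
      next
        case 2 then show ?thesis using L1 bef_L_lt by blast
      next
        case 3 then show ?thesis using L1 bef_L_lt bef_L_anti assms(5,6) lt_irrefl by metis
      qed
    next
      case False
      then show ?thesis using case2 \<open>x \<in> Up g\<close> assms(5-7) by blast
    qed
  next
    case False
    show ?thesis
    proof (cases "z \<in> Up g")
      case True
      have ne: "x \<noteq> z" using True False by blast
      have w: "wt z x \<le> k" using assms(7) unfolding wt_def by simp
      have "bef (fp g \<rho>) z x \<longleftrightarrow> bef (fp g \<sigma>) z x" using case2[OF assms(6,5) w True False] .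
      then show ?thesis using bef_L_anti[OF L1(1) assms(5,6) ne] bef_L_anti[OF L1(2) assms(5,6) ne] by blast
    next
      case zF: False
      have "bef (fp g \<rho>) x z = bef \<rho> x z" using fp_rules[OF assms(1,3,5,6)] False zF by blast
      moreover have "bef (fp g \<sigma>) x z = bef \<sigma> x z" using fp_rules[OF assms(2,3,5,6)] False zF by blast
      ultimately show ?thesis using side False zF by blast
    qed
  qed
qed

definition Inv :: "nat list \<Rightarrow> nat \<Rightarrow> nat set \<Rightarrow> nat list \<Rightarrow> nat list \<Rightarrow> bool" where
  "Inv w k S \<rho> \<sigma> \<longleftrightarrow> \<rho> \<in> L \<and> \<sigma> \<in> L \<and> AG k \<rho> \<sigma> \<and> NU w \<rho> \<sigma> \<and>
     (\<forall>x\<in>{1..n}. \<forall>z\<in>{1..n}. wt x z \<le> k \<longrightarrow> (x \<in> S \<or> z \<in> S) \<longrightarrow> (bef \<rho> x z \<longleftrightarrow> bef \<sigma> x z))"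

lemma Inv_step:
  assumes "Inv w k S \<rho> \<sigma>" "g \<in> set w" "set w \<subseteq> {1..n}"
  shows "Inv w k (S \<union> Up g) (fp g \<rho>) (fp g \<sigma>)"
proof -
  have I: "\<rho> \<in> L" "\<sigma> \<in> L" "AG k \<rho> \<sigma>" "NU w \<rho> \<sigma>"
    and IS: "\<And>x z. x\<in>{1..n} \<Longrightarrow> z\<in>{1..n} \<Longrightarrow> wt x z \<le> k \<Longrightarrow> (x \<in> S \<or> z \<in> S) \<Longrightarrow> (bef \<rho> x z \<longleftrightarrow> bef \<sigma> x z)"
    using assms(1) unfolding Inv_def by blast+
  have g: "g \<in> {1..n}" using assms by blast
  have Ug: "Up g \<subseteq> UU w" using assms(2) unfolding UU_def by blast
  have L1: "fp g \<rho> \<in> L" "fp g \<sigma> \<in> L" using fp_L I g by auto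
  have AG1: "AG k (fp g \<rho>) (fp g \<sigma>)" unfolding AG_def
  proof (intro ballI impI)
    fix x z assume xz: "x \<in> {1..n}" "z \<in> {1..n}" "wt x z < k"
    show "bef (fp g \<rho>) x z \<longleftrightarrow> bef (fp g \<sigma>) x z"
      by (rule step_pair[OF I(1,2) g I(3) xz(1,2)]) (use xz I(3) in \<open>auto simp: AG_def\<close>)
  qed
  have NU1: "NU w (fp g \<rho>) (fp g \<sigma>)" unfolding NU_def
  proof (intro ballI impI)
    fix x z assume xz: "x \<in> {1..n}" "z \<in> {1..n}" "x \<notin> UU w" "z \<notin> UU w"
    then have "x \<notin> Up g" "z \<notin> Up g" using Ug by auto
    then have "bef (fp g \<rho>) x z = bef \<rho> x z" "bef (fp g \<sigma>) x z = bef \<sigma> x z"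
      using fp_rules[OF I(1) g xz(1,2)] fp_rules[OF I(2) g xz(1,2)] by blast+
    then show "bef (fp g \<rho>) x z \<longleftrightarrow> bef (fp g \<sigma>) x z" using I(4) xz unfolding NU_def by blast
  qed
  have S1: "bef (fp g \<rho>) x z \<longleftrightarrow> bef (fp g \<sigma>) x z"
    if xz: "x\<in>{1..n}" "z\<in>{1..n}" "wt x z \<le> k" "x \<in> S \<union> Up g \<or> z \<in> S \<union> Up g" for x z
  proof (rule step_pair[OF I(1,2) g I(3) xz(1-3)])
    assume "x \<notin> Up g" "z \<notin> Up g"
    then have "x \<in> S \<or> z \<in> S" using xz(4) by blast
    then show "bef \<rho> x z \<longleftrightarrow> bef \<sigma> x z" using IS xz by blast
  qed
  show ?thesis unfolding Inv_def using L1 AG1 NU1 S1 by blast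
qed

lemma Inv_word:
  assumes "Inv w k S \<rho> \<sigma>" "set v \<subseteq> set w" "set w \<subseteq> {1..n}"
  shows "Inv w k (S \<union> (\<Union>g\<in>set v. Up g)) (F v \<rho>) (F v \<sigma>)"
  using assms
proof (induction v arbitrary: S \<rho> \<sigma>)
  case Nil then show ?case by simp
next
  case (Cons g v)
  have "Inv w k (S \<union> Up g) (fp g \<rho>) (fp g \<sigma>)" using Inv_step Cons.prems by auto
  from Cons.IH[OF this] Cons.prems show ?case by (simp add: Un_assoc)
qed

lemma block:
  assumes "\<rho> \<in> L" "\<sigma> \<in> L" "AG k \<rho> \<sigma>" "NU w \<rho> \<sigma>" "set w \<subseteq> {1..n}"
  shows "AG (Suc k) (F w \<rho>) (F w \<sigma>) \<and> NU w (F w \<rho>) (F w \<sigma>) \<and> F w \<rho> \<in> L \<and> F w \<sigma> \<in> L"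
proof -
  have "Inv w k {} \<rho> \<sigma>" using assms unfolding Inv_def by blast
  from Inv_word[OF this _ assms(5)] have I: "Inv w k (UU w) (F w \<rho>) (F w \<sigma>)"
    unfolding UU_def by simp
  have "AG (Suc k) (F w \<rho>) (F w \<sigma>)" unfolding AG_def
  proof (intro ballI impI)
    fix x z assume xz: "x \<in> {1..n}" "z \<in> {1..n}" "wt x z < Suc k"
    show "bef (F w \<rho>) x z \<longleftrightarrow> bef (F w \<sigma>) x z"
    proof (cases "x \<in> UU w \<or> z \<in> UU w")
      case True
      then show ?thesis using I xz unfolding Inv_def by auto
    next
      case False
      then show ?thesis using I xz unfolding Inv_def NU_def by auto
    qed
  qed
  then show ?thesis using I unfolding Inv_def by blast
qed

abbreviation pw :: "nat list \<Rightarrow> nat \<Rightarrow> nat list" where "pw w m \<equiv> concat (replicate m w)"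

lemma blocks:
  assumes "\<rho> \<in> L" "\<sigma> \<in> L" "AG k \<rho> \<sigma>" "NU w \<rho> \<sigma>" "set w \<subseteq> {1..n}"
  shows "AG (k + m) (F (pw w m) \<rho>) (F (pw w m) \<sigma>)"
  using assms
proof (induction m arbitrary: k \<rho> \<sigma>)
  case 0 then show ?case by simp
next
  case (Suc m)
  note B = block[OF Suc.prems]
  have "AG (Suc k + m) (F (pw w m) (F w \<rho>)) (F (pw w m) (F w \<sigma>))"
    using Suc.IH B Suc.prems(5) by blast
  then show ?case by (simp add: F_append)
qed

lemma NU_F:
  assumes "\<rho> \<in> L" "set d \<subseteq> set w" "set w \<subseteq> {1..n}"
  shows "NU w (F d \<rho>) \<rho>"
  using assms
proof (induction d arbitrary: \<rho>)
  case Nil then show ?case unfolding NU_def by simp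
next
  case (Cons g d)
  have g: "g \<in> {1..n}" "g \<in> set w" using Cons.prems by auto
  have L1: "fp g \<rho> \<in> L" using fp_L Cons.prems g by auto
  have IH: "NU w (F d (fp g \<rho>)) (fp g \<rho>)" using Cons.IH[OF L1] Cons.prems by auto
  have "NU w (fp g \<rho>) \<rho>" unfolding NU_def
  proof (intro ballI impI)
    fix x z assume xz: "x \<in> {1..n}" "z \<in> {1..n}" "x \<notin> UU w" "z \<notin> UU w"
    then have "x \<notin> Up g" "z \<notin> Up g" using g unfolding UU_def by auto
    then show "bef (fp g \<rho>) x z \<longleftrightarrow> bef \<rho> x z" using fp_rules[OF Cons.prems(1) g(1) xz(1,2)] by blast
  qed
  then show ?case using IH unfolding NU_def by simp
qed

lemma key:
  assumes "\<rho> \<in> L" "set d \<subseteq> set w" "set w \<subseteq> {1..n}"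
  shows "F (pw w (2 * n + 1)) (F d \<rho>) = F (pw w (2 * n + 1)) \<rho>"
proof -
  have s1: "set d \<subseteq> {1..n}" using assms by blast
  have L0: "F d \<rho> \<in> L" using F_L[OF s1 assms(1)] .
  have ag0: "AG 0 (F d \<rho>) \<rho>" unfolding AG_def by simp
  have sp: "set (pw w m) \<subseteq> {1..n}" for m using assms(3) by auto
  have A: "AG (0 + (2 * n + 1)) (F (pw w (2 * n + 1)) (F d \<rho>)) (F (pw w (2 * n + 1)) \<rho>)"
    using blocks[OF L0 assms(1) ag0 NU_F[OF assms] assms(3)] .
  define r1 where "r1 = F (pw w (2 * n + 1)) (F d \<rho>)"
  define r2 where "r2 = F (pw w (2 * n + 1)) \<rho>"
  have L2: "r1 \<in> L" "r2 \<in> L" unfolding r1_def r2_def by (rule F_L[OF sp L0], rule F_L[OF sp assms(1)])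
  have "bef r1 x z = bef r2 x z" for x z
  proof (cases "x \<in> {1..n} \<and> z \<in> {1..n}")
    case True
    have "wt x z < 0 + (2 * n + 1)" unfolding wt_def by simp
    then show ?thesis using A True unfolding AG_def r1_def r2_def by blast
  next
    case False
    then show ?thesis using L2 inL bef_mem by metis
  qed
  then have "r1 = r2" using L2 inL bef_eq_list by metis
  then show ?thesis unfolding r1_def r2_def .
qed

end


context FC begin

definition Mw :: "nat list \<Rightarrow> mat" where
  "Mw ws = (\<lambda>\<pi>' \<pi>. if \<pi> \<in> L \<and> \<pi>' = F ws \<pi> then 1 else 0)"

lemma finite_L: "finite L"
proof -
  have "L \<subseteq> {xs. set xs \<subseteq> {1..n} \<and> length xs = n}" using inL L_length by auto
  moreover have "finite {xs. set xs \<subseteq> {1..n} \<and> length xs = n}" by (rule finite_lists_length_eq) simp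
  ultimately show ?thesis by (rule finite_subset)
qed

lemma G_eq: "i \<in> {1..n} \<Longrightarrow> G n lt i = Mw [i]"
  unfolding G_def Mw_def L_def[symmetric] using fp_L unfolding fp_def F_def by (auto intro!: ext)

lemma idm_eq: "idm n lt = Mw []"
  unfolding idm_def Mw_def L_def by (auto intro!: ext)

lemma mmul_eq:
  assumes "set b \<subseteq> {1..n}"
  shows "mmul n lt (Mw a) (Mw b) = Mw (b @ a)"
proof (intro ext)
  fix \<pi>' \<pi>
  show "mmul n lt (Mw a) (Mw b) \<pi>' \<pi> = Mw (b @ a) \<pi>' \<pi>"
  proof (cases "\<pi> \<in> L")
    case False
    then show ?thesis unfolding mmul_def Mw_def by simp
  next
    case True
    define s where "s = F b \<pi>"
    have sL: "s \<in> L" unfolding s_def using F_L[OF assms True] .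
    have "mmul n lt (Mw a) (Mw b) \<pi>' \<pi> = (\<Sum>\<sigma>\<in>L. if \<sigma> = s then (if \<pi>' = F a s then 1 else 0) else 0)"
      unfolding mmul_def Mw_def L_def[symmetric] s_def[symmetric] using True
      by (intro sum.cong) auto
    also have "\<dots> = (if \<pi>' = F a s then 1 else 0)" using sL finite_L by simp
    also have "\<dots> = Mw (b @ a) \<pi>' \<pi>" unfolding Mw_def s_def using True by (simp add: F_append)
    finally show ?thesis .
  qed
qed

lemma gen_Mw: "A \<in> gen_monoid n lt \<Longrightarrow> \<exists>ws. set ws \<subseteq> {1..n} \<and> A = Mw ws"
proof (induction rule: gen_monoid.induct)
  case one then show ?case using idm_eq by (intro exI[of _ "[]"]) auto
next
  case (gen i) then show ?case using G_eq by (intro exI[of _ "[i]"]) auto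
next
  case (mult A B)
  then obtain a b where "set a \<subseteq> {1..n}" "A = Mw a" "set b \<subseteq> {1..n}" "B = Mw b" by blast
  then show ?case using mmul_eq by (intro exI[of _ "b @ a"]) auto
qed

lemma Mw_eqD: "Mw a = Mw b \<Longrightarrow> \<pi> \<in> L \<Longrightarrow> F a \<pi> = F b \<pi>"
proof -
  assume e: "Mw a = Mw b" and p: "\<pi> \<in> L"
  have "Mw a (F a \<pi>) \<pi> = 1" unfolding Mw_def using p by simp
  then have "Mw b (F a \<pi>) \<pi> = 1" using e by simp
  then show ?thesis unfolding Mw_def by (simp split: if_splits)
qed

lemma Mw_eqI: "(\<And>\<pi>. \<pi> \<in> L \<Longrightarrow> F a \<pi> = F b \<pi>) \<Longrightarrow> Mw a = Mw b"
  unfolding Mw_def by (auto intro!: ext)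

lemma iter:
  assumes "\<And>\<pi>. \<pi> \<in> L \<Longrightarrow> F a \<pi> = F a (F w \<pi>)" "set w \<subseteq> {1..n}" "\<pi> \<in> L"
  shows "F a \<pi> = F a (F (pw w m) \<pi>)"
  using assms(3)
proof (induction m arbitrary: \<pi>)
  case 0 then show ?case by simp
next
  case (Suc m)
  have "F w \<pi> \<in> L" using F_L[OF assms(2) Suc.prems] .
  then have "F a (F w \<pi>) = F a (F (pw w m) (F w \<pi>))" using Suc.IH by blast
  then show ?case using assms(1)[OF Suc.prems] by (simp add: F_append)
qed

theorem main: "R_trivial (gen_monoid n lt) (mmul n lt)"
  unfolding R_trivial_def
proof (intro ballI impI)
  fix x y assume x: "x \<in> gen_monoid n lt" and y: "y \<in> gen_monoid n lt"
    and eq: "mmul n lt x ` gen_monoid n lt = mmul n lt y ` gen_monoid n lt"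
  obtain a where a: "set a \<subseteq> {1..n}" "x = Mw a" using gen_Mw[OF x] by blast
  obtain b where b: "set b \<subseteq> {1..n}" "y = Mw b" using gen_Mw[OF y] by blast
  have one: "idm n lt \<in> gen_monoid n lt" by (rule gen_monoid.one)
  have "x = mmul n lt x (idm n lt)" using a idm_eq mmul_eq[of "[]" a] by simp
  then have "x \<in> mmul n lt y ` gen_monoid n lt" using eq one by auto
  then obtain C where C: "C \<in> gen_monoid n lt" "x = mmul n lt y C" by blast
  obtain c where c: "set c \<subseteq> {1..n}" "C = Mw c" using gen_Mw[OF C(1)] by blast
  have "y = mmul n lt y (idm n lt)" using b idm_eq mmul_eq[of "[]" b] by simp
  then have "y \<in> mmul n lt x ` gen_monoid n lt" using eq one by auto
  then obtain D where D: "D \<in> gen_monoid n lt" "y = mmul n lt x D" by blast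
  obtain d where d: "set d \<subseteq> {1..n}" "D = Mw d" using gen_Mw[OF D(1)] by blast
  have xa: "Mw a = Mw (c @ b)" using a b c C mmul_eq by simp
  have yb: "Mw b = Mw (d @ a)" using a b d D mmul_eq by simp
  define w where "w = c @ d"
  have w: "set w \<subseteq> {1..n}" using c d unfolding w_def by auto
  have fa: "F a \<pi> = F a (F w \<pi>)" if "\<pi> \<in> L" for \<pi>
  proof -
    have "F a \<pi> = F b (F c \<pi>)" using Mw_eqD[OF xa that] by (simp add: F_append)
    also have "\<dots> = F a (F d (F c \<pi>))" using Mw_eqD[OF yb] F_L[OF c(1) that] by (simp add: F_append)
    finally show ?thesis unfolding w_def by (simp add: F_append)
  qed
  have "F b \<pi> = F a \<pi>" if p: "\<pi> \<in> L" for \<pi>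
  proof -
    let ?m = "2 * n + 1"
    have dL: "F d \<pi> \<in> L" using F_L[OF d(1) p] .
    have "F b \<pi> = F a (F d \<pi>)" using Mw_eqD[OF yb p] by (simp add: F_append)
    also have "\<dots> = F a (F (pw w ?m) (F d \<pi>))" using iter[OF fa w dL] .
    also have "\<dots> = F a (F (pw w ?m) \<pi>)" using key[OF p _ w] unfolding w_def by simp
    also have "\<dots> = F a \<pi>" by (rule sym[OF iter[OF fa w p]])
    finally show ?thesis .
  qed
  then show "x = y" using a b Mw_eqI by metis
qed

end

theorem theorem6p9:
  fixes n :: nat and lt :: "nat \<Rightarrow> nat \<Rightarrow> bool"
  assumes "rooted_forest n lt"
    and "natural_labeling lt"
  shows "R_trivial (gen_monoid n lt) (mmul n lt)"
proof -
  interpret FC n lt using assms by unfold_locales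
  show ?thesis by (rule main)
qed

end
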